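(* Let $q$ be a prime, let $d=\pi(q-1)$ be the number of primes less than $q$, and let $p_1<p_2<\dots<p_d$ be these primes. For $n\in\{1,2,\dots,q-1\}$ write $n=\prod_{i=1}^d p_i^{\mu_i(n)}$ and define the linear form $\mathscr{L}_n:\mathbb{F}_q^d\to\mathbb{F}_q$ by $\mathscr{L}_n(\mathbf{v})=\sum_{i=1}^d \mu_i(n)v_i$ for $\mathbf{v}=(v_1,\dots,v_d)$. For a fixed $x_0\in\mathbb{F}_q^\times$ let $$N_q(x_0)=\#\{\mathbf{v}\in\mathbb{F}_q^d:\ \mathscr{L}_n(\mathbf{v})\neq x_0 \text{ for all } n\in\{1,2,\dots,q-1\}\},$$ and put $c(q)=N_q(x_0)/q^d$. Then, as $q\to\infty$, $$c(q)=\frac{1}{e}+O\!\left(\frac{1}{\log_2 q}\right).$$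
   Context: $\log x:=\max\{\ln x,2\}$ and $\log_k x:=\log(\log_{k-1}x)$ for $k\ge 2$. $\pi(x)$ is the number of primes $\le x$. *)

theory Defs
  imports "HOL-Computational_Algebra.Primes" "HOL-Library.FuncSet" Complex_Main
begin

text \<open>The paper's truncated logarithm: log x = max(ln x, 2), and log_2 x = log(log x).\<close>
definition plog :: "real \<Rightarrow> real" where
  "plog x = max (ln x) 2"

definition plog2 :: "real \<Rightarrow> real" where
  "plog2 x = plog (plog x)"

text \<open>Primes less than q; they index the coordinates of F_q^d, d = pi(q-1).\<close>
definition primes_below :: "nat \<Rightarrow> nat set" where
  "primes_below q = {p. prime p \<and> p < q}"

text \<open>Linear form L_n(v) = sum_i mu_i(n) v_i in F_q, with F_q represented by {0..<q}
  (arithmetic mod q) and v indexed by the primes p_i < q.\<close>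
definition Lform :: "nat \<Rightarrow> nat \<Rightarrow> (nat \<Rightarrow> nat) \<Rightarrow> nat" where
  "Lform q n v = (\<Sum>p\<in>primes_below q. multiplicity p n * v p) mod q"

definition Nq :: "nat \<Rightarrow> nat \<Rightarrow> nat" where
  "Nq q x0 = card {v \<in> primes_below q \<rightarrow>\<^sub>E {0..<q}. \<forall>n\<in>{1..q-1}. Lform q n v \<noteq> x0}"

definition cq :: "nat \<Rightarrow> nat \<Rightarrow> real" where
  "cq q x0 = real (Nq q x0) / real q ^ card (primes_below q)"

end

theory Submission
  imports Defs "HOL-Real_Asymp.Real_Asymp"
begin


lemma sum_PiE_fiber:
  fixes G :: "(nat \<Rightarrow> nat) \<Rightarrow> real"
  assumes k: "k \<in> P"
  shows "(\<Sum>v\<in>P \<rightarrow>\<^sub>E {0..<q}. G v) = (\<Sum>g\<in>(P-{k}) \<rightarrow>\<^sub>E {0..<q}. \<Sum>t\<in>{0..<q}. G (g(k:=t)))"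
proof -
  let ?T = "\<lambda>_::nat. {0..<q::nat}"
  let ?h = "\<lambda>(y::nat, g::nat\<Rightarrow>nat). g(k:=y)"
  have eq: "P \<rightarrow>\<^sub>E {0..<q} = ?h ` ({0..<q} \<times> ((P-{k}) \<rightarrow>\<^sub>E {0..<q}))"
    using PiE_insert_eq[of k "P-{k}" ?T] k by (simp add: insert_absorb)
  have inj: "inj_on ?h ({0..<q} \<times> ((P-{k}) \<rightarrow>\<^sub>E {0..<q}))"
    using inj_combinator[of k "P-{k}" ?T] by simp
  have "(\<Sum>v\<in>P \<rightarrow>\<^sub>E {0..<q}. G v) = (\<Sum>x\<in>{0..<q} \<times> ((P-{k}) \<rightarrow>\<^sub>E {0..<q}). G (?h x))"
    unfolding eq by (subst sum.reindex[OF inj]) simp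
  also have "\<dots> = (\<Sum>t\<in>{0..<q}. \<Sum>g\<in>(P-{k}) \<rightarrow>\<^sub>E {0..<q}. G (g(k:=t)))"
    by (simp add: sum.cartesian_product split_def)
  also have "\<dots> = (\<Sum>g\<in>(P-{k}) \<rightarrow>\<^sub>E {0..<q}. \<Sum>t\<in>{0..<q}. G (g(k:=t)))"
    by (rule sum.swap)
  finally show ?thesis .
qed

lemma fiber_avg:
  fixes F :: "(nat \<Rightarrow> nat) \<Rightarrow> real" and S :: "(nat\<Rightarrow>nat) \<Rightarrow> nat set"
  assumes k: "k \<in> P"
    and F: "\<And>v t. F (v(k:=t)) = F v" and S: "\<And>v t. S (v(k:=t)) = S v"
    and Ssub: "\<And>v. S v \<subseteq> {0..<q}"
  shows "(\<Sum>v\<in>P \<rightarrow>\<^sub>E {0..<q}. if v k \<in> S v then F v else 0) * q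
       = (\<Sum>v\<in>P \<rightarrow>\<^sub>E {0..<q}. F v * card (S v))"
proof -
  have 1: "(\<Sum>t\<in>{0..<q}. if (g(k:=t)) k \<in> S (g(k:=t)) then F (g(k:=t)) else 0) = F g * card (S g)" for g
  proof -
    have "(\<Sum>t\<in>{0..<q}. if (g(k:=t)) k \<in> S (g(k:=t)) then F (g(k:=t)) else 0)
        = (\<Sum>t\<in>{0..<q}. if t \<in> S g then F g else 0)" using F S by (intro sum.cong) auto
    also have "\<dots> = (\<Sum>t\<in>{0..<q} \<inter> S g. F g)" by (subst sum.inter_restrict) (auto intro: sum.cong)
    also have "\<dots> = F g * card (S g)" using Ssub[of g] by (simp add: Int_absorb1)
    finally show ?thesis .
  qed
  have 2: "(\<Sum>t\<in>{0..<q}. F (g(k:=t)) * card (S (g(k:=t)))) = q * (F g * card (S g))" for g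
    using F S by simp
  show ?thesis
    unfolding sum_PiE_fiber[OF k, of _ q] 1 2 by (simp add: sum_distrib_right sum_distrib_left mult.commute)
qed




lemma int_dvd_small:
  fixes q :: nat and c :: int
  assumes "int q dvd c" "\<bar>c\<bar> < int q"
  shows "c = 0"
proof -
  obtain k where k: "c = int q * k" using assms(1) by (auto elim: dvdE)
  show ?thesis
  proof (rule ccontr)
    assume "c \<noteq> 0"
    hence "k \<noteq> 0" using k by auto
    hence "\<bar>k\<bar> \<ge> 1" by linarith
    hence "int q * 1 \<le> int q * \<bar>k\<bar>" by (intro mult_left_mono) auto
    thus False using assms(2) k by (simp add: abs_mult)
  qed
qed

lemma prime_dvd_mult_small:
  fixes q :: nat and a c :: int
  assumes q: "prime q" and d: "int q dvd a * c" and na: "\<not> int q dvd a" and c: "\<bar>c\<bar> < int q"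
  shows "c = 0"
proof -
  have "prime (int q)" using q by simp
  hence "int q dvd c" using d na prime_dvd_mult_iff by blast
  thus ?thesis using c int_dvd_small by blast
qed

lemma lin_upd:
  fixes c :: "nat \<Rightarrow> int"
  assumes "finite P" "p \<in> P"
  shows "(\<Sum>r\<in>P. c r * int ((v(p:=t)) r)) = c p * int t + (\<Sum>r\<in>P-{p}. c r * int (v r))"
proof -
  have "(\<Sum>r\<in>P. c r * int ((v(p:=t)) r)) = c p * int t + (\<Sum>r\<in>P-{p}. c r * int ((v(p:=t)) r))"
    using assms by (simp add: sum.remove)
  also have "(\<Sum>r\<in>P-{p}. c r * int ((v(p:=t)) r)) = (\<Sum>r\<in>P-{p}. c r * int (v r))"
    by (intro sum.cong) auto
  finally show ?thesis .
qed



lemma lin_unique: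
  fixes c :: "nat \<Rightarrow> int"
  assumes "finite P" "p \<in> P" "prime q" "\<not> int q dvd c p" "t1 < q" "t2 < q"
    and "int q dvd (\<Sum>r\<in>P. c r * int ((v(p:=t1)) r)) + d"
    and "int q dvd (\<Sum>r\<in>P. c r * int ((v(p:=t2)) r)) + d"
  shows "t1 = t2"
proof -
  let ?R = "\<Sum>r\<in>P-{p}. c r * int (v r)"
  have "int q dvd (c p * int t1 + ?R + d) - (c p * int t2 + ?R + d)"
    using assms(7,8) lin_upd[OF assms(1,2), of c v] by (intro dvd_diff) simp_all
  hence "int q dvd c p * (int t1 - int t2)" by (simp add: right_diff_distrib)
  hence "int t1 - int t2 = 0" using prime_dvd_mult_small[OF assms(3) _ assms(4)] assms(5,6) by force
  thus ?thesis by simp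
qed

lemma mod_unique:
  fixes q e t1 t2 b :: nat
  assumes "prime q" "0 < e" "e < q" "t1 < q" "t2 < q" "(e*t1 + b) mod q = (e*t2 + b) mod q"
  shows "t1 = t2"
proof -
  have "int (e*t1 + b) mod int q = int (e*t2 + b) mod int q"
    using assms(6) by (metis of_nat_mod)
  hence "int q dvd int (e*t1+b) - int (e*t2+b)" by (simp add: mod_eq_dvd_iff)
  hence "int q dvd int e * (int t1 - int t2)" by (simp add: algebra_simps)
  moreover have "\<not> int q dvd int e" using assms(2,3) by (simp add: nat_dvd_not_less)
  ultimately have "int t1 - int t2 = 0" using prime_dvd_mult_small[OF assms(1)] assms(4,5) by force
  thus ?thesis by simp
qed



lemma mod_exists:
  fixes q e b x :: nat
  assumes "prime q" "0 < e" "e < q" "x < q"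
  shows "\<exists>t<q. (e*t + b) mod q = x"
proof -
  let ?f = "\<lambda>t. (e*t + b) mod q"
  have inj: "inj_on ?f {0..<q}"
  proof (rule inj_onI)
    fix a1 a2 assume "a1 \<in> {0..<q}" "a2 \<in> {0..<q}" "?f a1 = ?f a2"
    thus "a1 = a2" using mod_unique[OF assms(1,2,3), of a1 a2 b] by simp
  qed
  have q0: "q > 0" using assms(1) prime_gt_0_nat by blast
  have sub: "?f ` {0..<q} \<subseteq> {0..<q}" using q0 by auto
  have "card (?f ` {0..<q}) = card {0..<q}" using card_image[OF inj] .
  hence "?f ` {0..<q} = {0..<q}" using sub by (simp add: card_subset_eq)
  hence "x \<in> ?f ` {0..<q}" using assms(4) by simp
  thus ?thesis by auto
qed



lemma mult_lt:
  fixes n p :: nat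
  assumes "prime p" "0 < n" "n < q"
  shows "multiplicity p n < q"
proof -
  have "p ^ multiplicity p n dvd n" by (rule multiplicity_dvd)
  hence "p ^ multiplicity p n \<le> n" using assms(2) by (simp add: dvd_imp_le)
  moreover have "multiplicity p n < 2 ^ multiplicity p n" by simp
  moreover have "2 ^ multiplicity p n \<le> p ^ multiplicity p n"
    using assms(1) prime_ge_2_nat power_mono by blast
  ultimately show ?thesis using assms(3) by linarith
qed



lemma card_le_image_plus_pairs:
  assumes "finite A"
  shows "card A \<le> card (f ` A) + card {(a,b)\<in>A\<times>A. a \<noteq> b \<and> f a = f b}"
proof -
  let ?D = "{a\<in>A. \<exists>b\<in>A. b \<noteq> a \<and> f a = f b}"
  let ?X = "{(a,b)\<in>A\<times>A. a \<noteq> b \<and> f a = f b}"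
  have "inj_on f (A - ?D)" by (auto simp: inj_on_def)
  hence "card (A - ?D) = card (f ` (A - ?D))" by (simp add: card_image)
  also have "\<dots> \<le> card (f ` A)" using assms by (intro card_mono) auto
  finally have 1: "card (A - ?D) \<le> card (f ` A)" .
  have finX: "finite ?X" using assms by (auto intro: finite_subset[of _ "A\<times>A"])
  have "?D \<subseteq> fst ` ?X" by (force simp: image_iff)
  hence "card ?D \<le> card (fst ` ?X)" using finX by (intro card_mono) auto
  also have "\<dots> \<le> card ?X" using finX by (intro card_image_le)
  finally have 2: "card ?D \<le> card ?X" .
  have "card A = card (A - ?D) + card ?D" using assms
  proof -
    have "card ?D \<le> card A" using assms by (intro card_mono) auto
    thus ?thesis using assms by (subst card_Diff_subset) auto
  qed
  thus ?thesis using 1 2 by linarith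
qed




locale qsetup =
  fixes q x0 :: nat
  assumes q: "prime q" and x0: "1 \<le> x0" "x0 < q"
begin

abbreviation "P \<equiv> primes_below q"
definition Om where "Om = P \<rightarrow>\<^sub>E {0..<q}"
definition good where "good k v \<longleftrightarrow> (\<forall>n\<in>{1..q-1}. (\<forall>p\<in>prime_factors n. p < k) \<longrightarrow> Lform q n v \<noteq> x0)"
definition Nk where "Nk k = {n\<in>{1..q-1}. k \<in> prime_factors n \<and> (\<forall>p\<in>prime_factors n. p \<le> k)}"
definition Bk where "Bk k v = {t\<in>{0..<q}. \<exists>n\<in>Nk k. Lform q n (v(k:=t)) = x0}"
definition W where "W k = card {v\<in>Om. good k v}"

lemma q0: "q > 0" using q prime_gt_0_nat by blast

lemma finP: "finite P"
  by (rule finite_subset[of _ "{..<q}"]) (auto simp: primes_below_def)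

lemma finOm: "finite Om" unfolding Om_def using finP by (intro finite_PiE) auto

lemma cardOm: "card Om = q ^ card P"
  unfolding Om_def using finP by (simp add: card_PiE)

lemma cardOm_pos: "card Om > 0" using cardOm q0 by simp

lemma finNk: "finite (Nk k)" unfolding Nk_def by auto

lemma Nk_sub: "Nk k \<subseteq> {1..q-1}" unfolding Nk_def by auto

lemma Lform_upd:
  assumes "k \<in> P"
  shows "Lform q n (v(k:=t)) = (multiplicity k n * t + (\<Sum>p\<in>P-{k}. multiplicity p n * v p)) mod q"
proof -
  have "(\<Sum>p\<in>P. multiplicity p n * (v(k:=t)) p) = multiplicity k n * t + (\<Sum>p\<in>P-{k}. multiplicity p n * (v(k:=t)) p)"
    using assms finP by (simp add: sum.remove)
  also have "(\<Sum>p\<in>P-{k}. multiplicity p n * (v(k:=t)) p) = (\<Sum>p\<in>P-{k}. multiplicity p n * v p)"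
    by (intro sum.cong) auto
  finally show ?thesis unfolding Lform_def by simp
qed

lemma Lform_indep:
  assumes "\<not> k dvd n"
  shows "Lform q n (v(k:=t)) = Lform q n v"
  unfolding Lform_def
proof (intro arg_cong[where f="\<lambda>x. x mod q"] sum.cong refl)
  fix p assume "p \<in> P"
  show "multiplicity p n * (v(k:=t)) p = multiplicity p n * v p"
    using not_dvd_imp_multiplicity_0[OF assms] by (cases "p = k") auto
qed

lemma good_upd:
  assumes "prime k"
  shows "good k (v(k:=t)) = good k v"
proof -
  have "Lform q n (v(k:=t)) = Lform q n v" if "n \<in> {1..q-1}" "\<forall>p\<in>prime_factors n. p < k" for n
  proof -
    have "\<not> k dvd n"
    proof
      assume "k dvd n"
      hence "k \<in> prime_factors n" using assms that(1) by (auto simp: in_prime_factors_iff)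
      thus False using that(2) by auto
    qed
    thus ?thesis by (rule Lform_indep)
  qed
  thus ?thesis unfolding good_def by auto
qed

lemma Bk_upd: "Bk k (v(k:=t)) = Bk k v"
  unfolding Bk_def by simp

lemma Bk_sub: "Bk k v \<subseteq> {0..<q}" unfolding Bk_def by auto

lemma good_Suc:
  assumes k: "k \<in> P" and v: "v \<in> Om"
  shows "good (Suc k) v \<longleftrightarrow> good k v \<and> v k \<notin> Bk k v"
proof
  assume g: "good (Suc k) v"
  have "good k v" unfolding good_def
  proof (intro ballI impI)
    fix n assume n: "n \<in> {1..q-1}" "\<forall>p\<in>prime_factors n. p < k"
    hence "\<forall>p\<in>prime_factors n. p < Suc k" by auto
    thus "Lform q n v \<noteq> x0" using g n(1) unfolding good_def by blast
  qed
  moreover have "v k \<notin> Bk k v"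
  proof
    assume "v k \<in> Bk k v"
    then obtain n where n: "n \<in> Nk k" "Lform q n (v(k:=v k)) = x0" unfolding Bk_def by auto
    hence "Lform q n v = x0" by simp
    moreover have "n \<in> {1..q-1}" "\<forall>p\<in>prime_factors n. p < Suc k" using n(1) unfolding Nk_def by auto
    ultimately show False using g unfolding good_def by blast
  qed
  ultimately show "good k v \<and> v k \<notin> Bk k v" by blast
next
  assume a: "good k v \<and> v k \<notin> Bk k v"
  show "good (Suc k) v"
    unfolding good_def
  proof (intro ballI impI)
    fix n assume n: "n \<in> {1..q-1}" "\<forall>p\<in>prime_factors n. p < Suc k"
    show "Lform q n v \<noteq> x0"
    proof (cases "k \<in> prime_factors n")
      case True
      hence "n \<in> Nk k" using n unfolding Nk_def by auto
      moreover have "v k < q" using v k unfolding Om_def by auto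
      ultimately show ?thesis using a unfolding Bk_def by auto
    next
      case False
      hence "\<forall>p\<in>prime_factors n. p < k" using n(2) by (auto simp: less_Suc_eq)
      thus ?thesis using a n(1) unfolding good_def by blast
    qed
  qed
qed

lemma good_Suc_nonprime:
  assumes "\<not> prime k"
  shows "good (Suc k) v = good k v"
proof -
  have "(\<forall>p\<in>prime_factors n. p < Suc k) = (\<forall>p\<in>prime_factors n. p < k)" for n :: nat
    using assms by (auto simp: in_prime_factors_iff less_Suc_eq)
  thus ?thesis unfolding good_def by simp
qed

lemma P_prime: "k \<in> P \<Longrightarrow> prime k" by (simp add: primes_below_def)
lemma P_less: "k \<in> P \<Longrightarrow> k < q" by (simp add: primes_below_def)

lemma step_eq:
  assumes k: "k \<in> P"
  shows "real (W (Suc k)) * q = (\<Sum>v\<in>Om. if good k v then real q - real (card (Bk k v)) else 0)"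
proof -
  let ?F = "\<lambda>v. if good k v then 1 else (0::real)"
  let ?S = "\<lambda>v. {0..<q} - Bk k v"
  have fa: "(\<Sum>v\<in>P \<rightarrow>\<^sub>E {0..<q}. if v k \<in> ?S v then ?F v else 0) * q
       = (\<Sum>v\<in>P \<rightarrow>\<^sub>E {0..<q}. ?F v * card (?S v))"
    by (rule fiber_avg[OF k]) (auto simp: good_upd[OF P_prime[OF k]] Bk_upd)
  have "(\<Sum>v\<in>Om. if v k \<in> ?S v then ?F v else 0) = (\<Sum>v\<in>Om. if good (Suc k) v then 1 else 0)"
  proof (intro sum.cong refl)
    fix v assume v: "v \<in> Om"
    have "v k < q" using v k unfolding Om_def by auto
    thus "(if v k \<in> ?S v then ?F v else 0) = (if good (Suc k) v then 1 else 0)"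
      using good_Suc[OF k v] by auto
  qed
  also have "\<dots> = real (W (Suc k))" unfolding W_def using finOm
    by (simp add: sum.If_cases Int_def conj_commute)
  finally have 1: "(\<Sum>v\<in>Om. if v k \<in> ?S v then ?F v else 0) = real (W (Suc k))" .
  have 2: "?F v * card (?S v) = (if good k v then real q - real (card (Bk k v)) else 0)" for v
  proof -
    have "card (Bk k v) \<le> q" using card_mono[OF _ Bk_sub[of k v]] by simp
    hence "real (card (?S v)) = real q - real (card (Bk k v))"
      using Bk_sub[of k v] by (simp add: card_Diff_subset of_nat_diff finite_subset)
    thus ?thesis by simp
  qed
  show ?thesis using fa unfolding 1[unfolded Om_def] 2 Om_def .
qed

end


context qsetup begin

lemma Nk_mult:
  assumes "n \<in> Nk k"
  shows "0 < multiplicity k n" "multiplicity k n < q"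
proof -
  have n: "n \<in> {1..q-1}" "k \<in> prime_factors n" using assms unfolding Nk_def by auto
  thus "0 < multiplicity k n" by (simp add: prime_factors_multiplicity)
  show "multiplicity k n < q" using n by (intro mult_lt) (auto simp: in_prime_factors_iff)
qed

definition E where "E k n n' v \<longleftrightarrow> (\<exists>t<q. Lform q n (v(k:=t)) = x0 \<and> Lform q n' (v(k:=t)) = x0)"

lemma sol_ex1:
  assumes k: "k \<in> P" and n: "n \<in> Nk k"
  shows "\<exists>!t. t < q \<and> Lform q n (v(k:=t)) = x0"
proof -
  let ?b = "\<Sum>p\<in>P-{k}. multiplicity p n * v p"
  obtain t where "t < q" "(multiplicity k n * t + ?b) mod q = x0"
    using mod_exists[OF q Nk_mult[OF n] x0(2)] by blast
  moreover have "t1 = t2" if "t1 < q" "(multiplicity k n * t1 + ?b) mod q = x0"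
      "t2 < q" "(multiplicity k n * t2 + ?b) mod q = x0" for t1 t2
    using mod_unique[OF q Nk_mult[OF n], of t1 t2 ?b] that by simp
  ultimately show ?thesis unfolding Lform_upd[OF k] by blast
qed

definition sol where "sol k v n = (THE t. t < q \<and> Lform q n (v(k:=t)) = x0)"

lemma sol:
  assumes "k \<in> P" "n \<in> Nk k"
  shows "sol k v n < q" "Lform q n (v(k:=sol k v n)) = x0"
  using theI'[OF sol_ex1[OF assms, of v]] unfolding sol_def by auto

lemma Bk_eq:
  assumes k: "k \<in> P"
  shows "Bk k v = sol k v ` Nk k"
proof
  show "Bk k v \<subseteq> sol k v ` Nk k"
  proof
    fix t assume "t \<in> Bk k v"
    then obtain n where n: "n \<in> Nk k" "t < q" "Lform q n (v(k:=t)) = x0" unfolding Bk_def by auto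
    hence "t = sol k v n" using sol_ex1[OF k n(1), of v] sol[OF k n(1), of v] by blast
    thus "t \<in> sol k v ` Nk k" using n(1) by blast
  qed
  show "sol k v ` Nk k \<subseteq> Bk k v"
  proof
    fix t assume "t \<in> sol k v ` Nk k"
    then obtain n where n: "n \<in> Nk k" "t = sol k v n" by blast
    show "t \<in> Bk k v" unfolding Bk_def using sol[OF k n(1), of v] n by auto
  qed
qed

lemma card_Bk_le:
  assumes "k \<in> P"
  shows "card (Bk k v) \<le> card (Nk k)"
  unfolding Bk_eq[OF assms] by (rule card_image_le[OF finNk])

definition coll where "coll k v = card {(n,n')\<in>Nk k \<times> Nk k. n \<noteq> n' \<and> E k n n' v}"

lemma card_Bk_ge:
  assumes k: "k \<in> P"
  shows "card (Nk k) \<le> card (Bk k v) + coll k v"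
proof -
  have "card (Nk k) \<le> card (sol k v ` Nk k) + card {(a,b)\<in>Nk k \<times> Nk k. a \<noteq> b \<and> sol k v a = sol k v b}"
    by (rule card_le_image_plus_pairs[OF finNk])
  also have "card {(a,b)\<in>Nk k \<times> Nk k. a \<noteq> b \<and> sol k v a = sol k v b} \<le> coll k v"
    unfolding coll_def
  proof (rule card_mono)
    show "finite {(n,n')\<in>Nk k \<times> Nk k. n \<noteq> n' \<and> E k n n' v}"
      by (rule finite_subset[of _ "Nk k \<times> Nk k"]) (auto simp: finNk)
    show "{(a,b)\<in>Nk k \<times> Nk k. a \<noteq> b \<and> sol k v a = sol k v b} \<subseteq> {(n,n')\<in>Nk k \<times> Nk k. n \<noteq> n' \<and> E k n n' v}"
      using sol[OF k] unfolding E_def by fastforce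
  qed
  finally show ?thesis unfolding Bk_eq[OF k] by simp
qed

end


context qsetup begin

lemma mod_to_dvd:
  fixes a :: nat
  assumes "a mod q = x0"
  shows "int q dvd int a - int x0"
proof -
  have "int a mod int q = int x0 mod int q" using assms x0(2)
    by (metis mod_mod_trivial of_nat_mod)
  thus ?thesis by (simp add: mod_eq_dvd_iff)
qed

lemma coll_count:
  assumes k: "k \<in> P" and n: "n \<in> Nk k" and n': "n' \<in> Nk k" and ne: "n \<noteq> n'"
  shows "real q * card {v\<in>Om. E k n n' v} \<le> card Om"
proof -
  define e where "e = multiplicity k n"
  define e' where "e' = multiplicity k n'"
  define c where "c r = int e' * int (multiplicity r n) - int e * int (multiplicity r n')" for r
  define d where "d = int e * int x0 - int e' * int x0"
  define R where "R v \<longleftrightarrow> int q dvd (\<Sum>r\<in>P-{k}. c r * int (v r)) + d" for v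
  have finP': "finite (P-{k})" using finP by simp
  have ER: "R v" if Ev: "E k n n' v" for v
  proof -
    obtain t where t: "t < q" "Lform q n (v(k:=t)) = x0" "Lform q n' (v(k:=t)) = x0"
      using Ev unfolding E_def by blast
    define A where "A = (\<Sum>p\<in>P-{k}. multiplicity p n * v p)"
    define A' where "A' = (\<Sum>p\<in>P-{k}. multiplicity p n' * v p)"
    have h1: "int q dvd int (e*t + A) - int x0"
      using t(2) unfolding Lform_upd[OF k] e_def A_def by (rule mod_to_dvd)
    have h2: "int q dvd int (e'*t + A') - int x0"
      using t(3) unfolding Lform_upd[OF k] e'_def A'_def by (rule mod_to_dvd)
    have "int q dvd int e' * (int (e*t + A) - int x0) - int e * (int (e'*t + A') - int x0)"
      using dvd_diff[OF dvd_mult[OF h1, of "int e'"] dvd_mult[OF h2, of "int e"]] .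
    moreover have se: "(\<Sum>r\<in>P-{k}. c r * int (v r)) = int e' * int A - int e * int A'"
      unfolding c_def A_def A'_def
      by (simp add: left_diff_distrib sum_subtractf sum_distrib_left mult.assoc)
    moreover have "(\<Sum>r\<in>P-{k}. c r * int (v r)) + d = int e' * (int (e*t + A) - int x0) - int e * (int (e'*t + A') - int x0)"
      unfolding se d_def by (simp add: algebra_simps)
    ultimately show ?thesis unfolding R_def by simp
  qed
  have Rc: "real q * card {v\<in>Om. R v} \<le> card Om"
  proof (cases "\<exists>p\<in>P-{k}. \<not> int q dvd c p")
    case True
    then obtain p where p: "p \<in> P-{k}" "\<not> int q dvd c p" by blast
    hence pP: "p \<in> P" by simp
    let ?S = "\<lambda>v. {t\<in>{0..<q}. R (v(p:=t))}"
    have fa: "(\<Sum>v\<in>P \<rightarrow>\<^sub>E {0..<q}. if v p \<in> ?S v then (\<lambda>_. 1::real) v else 0) * q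
       = (\<Sum>v\<in>P \<rightarrow>\<^sub>E {0..<q}. (\<lambda>_. 1::real) v * card (?S v))"
      by (rule fiber_avg[OF pP]) auto
    have "(\<Sum>v\<in>Om. if v p \<in> ?S v then 1 else (0::real)) = (\<Sum>v\<in>Om. if R v then 1 else 0)"
    proof (intro sum.cong refl)
      fix v assume v: "v \<in> Om"
      have "v p < q" using v pP unfolding Om_def by auto
      thus "(if v p \<in> ?S v then 1 else (0::real)) = (if R v then 1 else 0)" by simp
    qed
    also have "\<dots> = real (card {v\<in>Om. R v})" using finOm
      by (simp add: sum.If_cases Int_def conj_commute)
    finally have 1: "(\<Sum>v\<in>Om. if v p \<in> ?S v then 1 else (0::real)) = real (card {v\<in>Om. R v})" .
    have 2: "card (?S v) \<le> 1" for v
    proof -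
      have "t1 = t2" if a1: "t1 \<in> ?S v" and a2: "t2 \<in> ?S v" for t1 t2
      proof -
        have "t1 < q" "t2 < q" "int q dvd (\<Sum>r\<in>P-{k}. c r * int ((v(p:=t1)) r)) + d"
          "int q dvd (\<Sum>r\<in>P-{k}. c r * int ((v(p:=t2)) r)) + d"
          using a1 a2 unfolding R_def by auto
        from lin_unique[OF finP' p(1) q p(2) this] show ?thesis .
      qed
      thus ?thesis using card_le_Suc0_iff_eq[of "?S v"] by simp
    qed
    have "(\<Sum>v\<in>Om. (1::real) * card (?S v)) \<le> (\<Sum>v\<in>Om. 1)"
      using 2 by (intro sum_mono) simp
    also have "\<dots> = card Om" by simp
    finally show ?thesis using fa 1 unfolding Om_def by (simp add: mult.commute)
  next
    case False
    hence cd: "\<forall>p\<in>P-{k}. int q dvd c p" by blast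
    have sd: "int q dvd (\<Sum>r\<in>P-{k}. c r * int (v r))" for v
      using cd by (intro dvd_sum) auto
    have nq: "\<not> int q dvd int x0" using x0 by (simp add: nat_dvd_not_less)
    show ?thesis
    proof (cases "e = e'")
      case False
      have "\<not> R v" for v
      proof
        assume "R v"
        hence "int q dvd d" using sd[of v] unfolding R_def by (metis dvd_add_right_iff)
        hence "int q dvd int x0 * (int e - int e')" unfolding d_def by (simp add: algebra_simps)
        moreover have "\<bar>int e - int e'\<bar> < int q"
          using Nk_mult[OF n] Nk_mult[OF n'] unfolding e_def e'_def by linarith
        ultimately have "int e - int e' = 0" using prime_dvd_mult_small[OF q _ nq] by blast
        thus False using False by simp
      qed
      thus ?thesis by simp
    next
      case True
      have eq: "multiplicity p n = multiplicity p n'" if "p \<in> P-{k}" for p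
      proof -
        have "int q dvd int e * (int (multiplicity p n) - int (multiplicity p n'))"
          using cd that True unfolding c_def by (simp add: algebra_simps)
        moreover have "\<not> int q dvd int e"
          using Nk_mult[OF n] unfolding e_def by (simp add: nat_dvd_not_less)
        moreover have "\<bar>int (multiplicity p n) - int (multiplicity p n')\<bar> < int q"
        proof -
          have "prime p" using that P_prime by auto
          moreover have "n \<in> {1..q-1}" "n' \<in> {1..q-1}" using subsetD[OF Nk_sub n] subsetD[OF Nk_sub n'] by auto
          ultimately have "multiplicity p n < q" "multiplicity p n' < q"
            by (auto intro!: mult_lt)
          thus ?thesis by linarith
        qed
        ultimately have "int (multiplicity p n) - int (multiplicity p n') = 0"
          using prime_dvd_mult_small[OF q] by blast
        thus ?thesis by simp
      qed
      have nn: "n \<in> {1..q-1}" "n' \<in> {1..q-1}" using subsetD[OF Nk_sub n] subsetD[OF Nk_sub n'] by auto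
      have "n = n'"
      proof (rule multiplicity_eq_nat)
        show "n > 0" "n' > 0" using nn by auto
        fix p :: nat assume pp: "prime p"
        show "multiplicity p n = multiplicity p n'"
        proof (cases "p \<in> P")
          case True
          thus ?thesis using eq True unfolding e_def e'_def
            by (cases "p = k") (use \<open>e = e'\<close> e_def e'_def in auto)
        next
          case False
          hence "p \<ge> q" using pp unfolding primes_below_def by auto
          hence "\<not> p dvd n" "\<not> p dvd n'" using nn by (auto dest: dvd_imp_le)
          thus ?thesis by (simp add: not_dvd_imp_multiplicity_0)
        qed
      qed
      thus ?thesis using ne by simp
    qed
  qed
  have "card {v\<in>Om. E k n n' v} \<le> card {v\<in>Om. R v}"
    using finOm ER by (intro card_mono) auto
  hence "real q * card {v\<in>Om. E k n n' v} \<le> real q * card {v\<in>Om. R v}"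
    by (intro mult_left_mono) auto
  thus ?thesis using Rc by linarith
qed

end


lemma sum_card_swap:
  assumes "finite A" "finite B"
  shows "(\<Sum>a\<in>A. card {b\<in>B. Q a b}) = (\<Sum>b\<in>B. card {a\<in>A. Q a b})"
proof -
  have "(\<Sum>a\<in>A. card {b\<in>B. Q a b}) = (\<Sum>a\<in>A. \<Sum>b\<in>B. if Q a b then 1 else 0)"
    using assms by (simp add: sum.inter_filter[symmetric])
  also have "\<dots> = (\<Sum>b\<in>B. \<Sum>a\<in>A. if Q a b then 1 else 0)" by (rule sum.swap)
  also have "\<dots> = (\<Sum>b\<in>B. card {a\<in>A. Q a b})"
    using assms by (simp add: sum.inter_filter[symmetric])
  finally show ?thesis .
qed

context qsetup begin

lemma coll_sum:
  assumes k: "k \<in> P"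
  shows "(\<Sum>v\<in>Om. real (coll k v)) * q \<le> real (card (Nk k))^2 * card Om"
proof -
  let ?X = "{x\<in>Nk k \<times> Nk k. fst x \<noteq> snd x}"
  have finX: "finite ?X" using finNk by auto
  have "coll k v = card {x\<in>?X. E k (fst x) (snd x) v}" for v
    unfolding coll_def by (rule arg_cong[where f=card]) auto
  hence "(\<Sum>v\<in>Om. coll k v) = (\<Sum>x\<in>?X. card {v\<in>Om. E k (fst x) (snd x) v})"
    using sum_card_swap[OF finOm finX, of "\<lambda>v x. E k (fst x) (snd x) v"] by simp
  hence "real (\<Sum>v\<in>Om. coll k v) = real (\<Sum>x\<in>?X. card {v\<in>Om. E k (fst x) (snd x) v})" by simp
  hence "(\<Sum>v\<in>Om. real (coll k v)) * q = (\<Sum>x\<in>?X. real q * card {v\<in>Om. E k (fst x) (snd x) v})"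
    by (simp add: sum_distrib_left sum_distrib_right mult.commute)
  also have "\<dots> \<le> (\<Sum>x\<in>?X. real (card Om))"
  proof (rule sum_mono)
    fix x assume "x \<in> ?X"
    thus "real q * card {v\<in>Om. E k (fst x) (snd x) v} \<le> real (card Om)"
      using coll_count[OF k] by (cases x) auto
  qed
  also have "\<dots> = card ?X * real (card Om)" by simp
  also have "card ?X \<le> card (Nk k \<times> Nk k)" using finNk by (intro card_mono) auto
  hence "real (card ?X) \<le> real (card (Nk k))^2"
    by (simp add: card_cartesian_product power2_eq_square flip: of_nat_mult)
  hence "card ?X * real (card Om) \<le> real (card (Nk k))^2 * card Om"
    by (intro mult_right_mono) auto
  finally show ?thesis .
qed

lemma sum_good: "(\<Sum>v\<in>Om. if good k v then c else 0) = c * real (W k)"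
  unfolding W_def using finOm by (simp add: sum.If_cases Int_def conj_commute)

lemma step_lower:
  assumes k: "k \<in> P"
  shows "(real q - card (Nk k)) * W k \<le> real (W (Suc k)) * q"
proof -
  have "(real q - card (Nk k)) * W k = (\<Sum>v\<in>Om. if good k v then real q - card (Nk k) else 0)"
    by (simp add: sum_good)
  also have "\<dots> \<le> (\<Sum>v\<in>Om. if good k v then real q - real (card (Bk k v)) else 0)"
    using card_Bk_le[OF k] by (intro sum_mono) auto
  finally show ?thesis using step_eq[OF k] by simp
qed

lemma step_upper:
  assumes k: "k \<in> P"
  shows "real (W (Suc k)) * q \<le> (real q - card (Nk k)) * W k + (\<Sum>v\<in>Om. real (coll k v))"
proof -
  have "real (W (Suc k)) * q = (\<Sum>v\<in>Om. if good k v then real q - real (card (Bk k v)) else 0)"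
    using step_eq[OF k] .
  also have "\<dots> \<le> (\<Sum>v\<in>Om. (if good k v then real q - card (Nk k) else 0) + real (coll k v))"
  proof (rule sum_mono)
    fix v
    show "(if good k v then real q - real (card (Bk k v)) else 0) \<le> (if good k v then real q - card (Nk k) else 0) + real (coll k v)"
      using card_Bk_ge[OF k, of v] by auto
  qed
  also have "\<dots> = (real q - card (Nk k)) * W k + (\<Sum>v\<in>Om. real (coll k v))"
    by (simp add: sum.distrib sum_good)
  finally show ?thesis .
qed

definition w where "w k = real (W k) / real (card Om)"
definition a where "a k = (if prime k then real (card (Nk k)) / q else 0)"

lemma card_Nk_lt: "card (Nk k) < q"
proof -
  have "card (Nk k) \<le> card {1..q-1}" by (rule card_mono[OF _ Nk_sub]) simp
  thus ?thesis using q0 by simp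
qed

lemma a_nonneg: "0 \<le> a k" unfolding a_def by auto
lemma a_le1: "a k \<le> 1" unfolding a_def using card_Nk_lt[of k] q0 by auto

lemma w_step_lower:
  assumes k: "k \<in> P"
  shows "(1 - a k) * w k \<le> w (Suc k)"
proof -
  have qp: "real q > 0" using q0 by simp
  have op: "real (card Om) > 0" using cardOm_pos by simp
  have "(real q - card (Nk k)) * W k / (real q * card Om) \<le> real (W (Suc k)) * q / (real q * card Om)"
    using step_lower[OF k] qp op by (intro divide_right_mono) auto
  thus ?thesis unfolding w_def a_def using P_prime[OF k] qp op
    by (simp add: field_simps)
qed

lemma w_step_upper:
  assumes k: "k \<in> P"
  shows "w (Suc k) \<le> (1 - a k) * w k + (a k)^2"
proof -
  have qp: "real q > 0" using q0 by simp
  have op: "real (card Om) > 0" using cardOm_pos by simp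
  have "real (W (Suc k)) * q * q \<le> (real q - card (Nk k)) * W k * q + (\<Sum>v\<in>Om. real (coll k v)) * q"
    using mult_right_mono[OF step_upper[OF k], of "real q"] qp by (simp add: distrib_right)
  also have "\<dots> \<le> (real q - card (Nk k)) * W k * q + real (card (Nk k))^2 * card Om"
    using coll_sum[OF k] by simp
  finally have h: "real (W (Suc k)) * q * q \<le> (real q - card (Nk k)) * W k * q + real (card (Nk k))^2 * card Om" .
  have "real (W (Suc k)) * q * q / (q * q * card Om) \<le> ((real q - card (Nk k)) * W k * q + real (card (Nk k))^2 * card Om) / (q * q * card Om)"
    using h qp op by (intro divide_right_mono) auto
  thus ?thesis unfolding w_def a_def using P_prime[OF k] qp op
    by (simp add: field_simps power2_eq_square)
qed

lemma w_step_nonprime: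
  assumes "\<not> prime k"
  shows "w (Suc k) = w k"
  unfolding w_def W_def using good_Suc_nonprime[OF assms] by simp

lemma w_2: "w 2 = 1"
proof -
  have "good 2 v" for v
    unfolding good_def
  proof (intro ballI impI)
    fix n assume n: "n \<in> {1..q-1}" "\<forall>p\<in>prime_factors n. p < 2"
    have "prime_factors n = {}"
    proof (rule ccontr)
      assume "prime_factors n \<noteq> {}"
      then obtain p where p: "p \<in> prime_factors n" by blast
      hence "prime p" by (simp add: in_prime_factors_iff)
      moreover have "p < 2" using n(2) p by blast
      ultimately show False using prime_ge_2_nat[of p] by linarith
    qed
    hence "prime_factorization n = {#}" by simp
    hence "n = 0 \<or> is_unit n" using prime_factorization_empty_iff[of n] by blast
    hence "n = 1" using n(1) by auto
    thus "Lform q n v \<noteq> x0" using x0 unfolding Lform_def by simp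
  qed
  hence "W 2 = card Om" unfolding W_def by simp
  thus ?thesis unfolding w_def using cardOm_pos by simp
qed

lemma w_bounds:
  assumes "2 \<le> k" "k \<le> q"
  shows "(\<Prod>j\<in>{2..<k}. 1 - a j) \<le> w k \<and> w k \<le> (\<Prod>j\<in>{2..<k}. 1 - a j) + (\<Sum>j\<in>{2..<k}. (a j)^2)"
  using assms
proof (induction k rule: nat_induct_at_least)
  case base
  thus ?case using w_2 by simp
next
  case (Suc k)
  let ?Pr = "\<Prod>j\<in>{2..<k}. 1 - a j"
  let ?Sm = "\<Sum>j\<in>{2..<k}. (a j)^2"
  have IH: "?Pr \<le> w k" "w k \<le> ?Pr + ?Sm" using Suc by auto
  have pr: "(\<Prod>j\<in>{2..<Suc k}. 1 - a j) = ?Pr * (1 - a k)" using Suc(1) by (simp add: prod.atLeastLessThan_Suc)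
  have sm: "(\<Sum>j\<in>{2..<Suc k}. (a j)^2) = ?Sm + (a k)^2" using Suc(1) by (simp add: sum.atLeastLessThan_Suc)
  have a0: "0 \<le> a k" "a k \<le> 1" using a_nonneg a_le1 .
  have Sm0: "0 \<le> ?Sm" by (intro sum_nonneg) auto
  show ?case
  proof (cases "prime k")
    case True
    hence kP: "k \<in> P" using Suc(3) unfolding primes_below_def by auto
    have "?Pr * (1 - a k) \<le> w k * (1 - a k)" using IH(1) a0 by (intro mult_right_mono) auto
    also have "\<dots> \<le> w (Suc k)" using w_step_lower[OF kP] by (simp add: mult.commute)
    finally have L: "(\<Prod>j\<in>{2..<Suc k}. 1 - a j) \<le> w (Suc k)" using pr by simp
    have "w (Suc k) \<le> (1 - a k) * w k + (a k)^2" by (rule w_step_upper[OF kP])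
    also have "\<dots> \<le> (1 - a k) * (?Pr + ?Sm) + (a k)^2" using IH(2) a0 by (intro add_right_mono mult_left_mono) auto
    also have "\<dots> \<le> ?Pr * (1 - a k) + ?Sm + (a k)^2" using a0 Sm0 by (simp add: algebra_simps mult_nonneg_nonneg)
    finally have U: "w (Suc k) \<le> (\<Prod>j\<in>{2..<Suc k}. 1 - a j) + (\<Sum>j\<in>{2..<Suc k}. (a j)^2)" using pr sm by simp
    show ?thesis using L U by blast
  next
    case False
    hence "a k = 0" unfolding a_def by simp
    thus ?thesis using IH pr sm w_step_nonprime[OF False] by simp
  qed
qed

lemma w_q: "w q = cq q x0"
proof -
  have "good q v = (\<forall>n\<in>{1..q-1}. Lform q n v \<noteq> x0)" for v
  proof -
    have "\<forall>p\<in>prime_factors n. p < q" if "n \<in> {1..q-1}" for n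
      using that by (auto simp: in_prime_factors_iff dest!: dvd_imp_le)
    thus ?thesis unfolding good_def by blast
  qed
  hence "W q = Nq q x0" unfolding W_def Nq_def Om_def by simp
  thus ?thesis unfolding w_def cq_def cardOm by simp
qed

end


context qsetup begin

lemma card_Nk_div:
  assumes j: "prime j"
  shows "card (Nk j) \<le> (q-1) div j"
proof -
  have j0: "j > 0" using j prime_gt_0_nat by blast
  have "Nk j \<subseteq> (\<lambda>i. j*i) ` {1..(q-1) div j}"
  proof
    fix n assume n: "n \<in> Nk j"
    hence n1: "1 \<le> n" "n \<le> q-1" "j dvd n" unfolding Nk_def by (auto simp: in_prime_factors_iff)
    have "n = j * (n div j)" using n1(3) by simp
    moreover have "n div j \<ge> 1" using n1 j0 by (metis dvd_div_eq_0_iff less_one not_le not_one_le_zero)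
    moreover have "n div j \<le> (q-1) div j" using n1(2) by (rule div_le_mono)
    ultimately show "n \<in> (\<lambda>i. j*i) ` {1..(q-1) div j}" by force
  qed
  hence "card (Nk j) \<le> card ((\<lambda>i. j*i) ` {1..(q-1) div j})" by (intro card_mono) auto
  also have "\<dots> \<le> card {1..(q-1) div j}" by (rule card_image_le) simp
  finally show ?thesis by simp
qed

lemma a_le_inv: "prime j \<Longrightarrow> a j \<le> 1 / j"
proof -
  assume j: "prime j"
  have j0: "real j > 0" using j prime_gt_0_nat by simp
  have "real (card (Nk j)) \<le> real ((q-1) div j)" using card_Nk_div[OF j] by linarith
  also have "\<dots> \<le> real (q-1) / real j" by (rule of_nat_div_le_of_nat)
  also have "\<dots> \<le> real q / real j" using j0 by (intro divide_right_mono) auto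
  finally have "real (card (Nk j)) / q \<le> real q / real j / q" using q0 by (intro divide_right_mono) auto
  thus ?thesis unfolding a_def using j q0 by simp
qed

lemma a_le_half: "a j \<le> 1/2"
proof (cases "prime j")
  case True
  have "a j \<le> 1 / j" by (rule a_le_inv[OF True])
  also have "\<dots> \<le> 1/2" using prime_ge_2_nat[OF True] by (simp add: field_simps)
  finally show ?thesis .
next
  case False thus ?thesis unfolding a_def by simp
qed

lemma sum_a: "(\<Sum>j\<in>{2..<q}. a j) = (real q - 2) / q"
proof -
  let ?I = "{j\<in>{2..<q}. prime j}"
  have "(\<Sum>j\<in>{2..<q}. a j) = (\<Sum>j\<in>?I. real (card (Nk j)) / q)"
    unfolding a_def by (simp add: sum.inter_filter[symmetric])
  also have "\<dots> = real (\<Sum>j\<in>?I. card (Nk j)) / q" by (simp add: sum_divide_distrib)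
  also have "(\<Sum>j\<in>?I. card (Nk j)) = card (\<Union>j\<in>?I. Nk j)"
  proof (rule card_UN_disjoint[symmetric])
    show "finite ?I" by simp
    show "\<forall>j\<in>?I. finite (Nk j)" by (simp add: finNk)
    show "\<forall>i\<in>?I. \<forall>j\<in>?I. i \<noteq> j \<longrightarrow> Nk i \<inter> Nk j = {}"
    proof (intro ballI impI)
      fix i j assume "i \<in> ?I" "j \<in> ?I" "i \<noteq> j"
      show "Nk i \<inter> Nk j = {}"
      proof (rule ccontr)
        assume "Nk i \<inter> Nk j \<noteq> {}"
        then obtain n where "n \<in> Nk i" "n \<in> Nk j" by blast
        hence "i \<le> j" "j \<le> i" unfolding Nk_def by auto
        thus False using \<open>i \<noteq> j\<close> by simp
      qed
    qed
  qed
  also have "(\<Union>j\<in>?I. Nk j) = {2..q-1}"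
  proof
    show "(\<Union>j\<in>?I. Nk j) \<subseteq> {2..q-1}"
    proof
      fix n assume "n \<in> (\<Union>j\<in>?I. Nk j)"
      then obtain j where "n \<in> Nk j" by blast
      hence "n \<in> {1..q-1}" "j \<in> prime_factors n" unfolding Nk_def by auto
      moreover have "n \<noteq> 1" using calculation(2) by auto
      ultimately show "n \<in> {2..q-1}" by auto
    qed
    show "{2..q-1} \<subseteq> (\<Union>j\<in>?I. Nk j)"
    proof
      fix n assume n: "n \<in> {2..q-1}"
      obtain p where p: "prime p" "p dvd n" using n prime_factor_nat[of n] by auto
      have "p \<in> prime_factors n" using p n by (simp add: in_prime_factors_iff)
      hence ne: "prime_factors n \<noteq> {}" by blast
      let ?j = "Max (prime_factors n)"
      have jin: "?j \<in> prime_factors n" using ne by (intro Max_in) auto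
      have jge: "\<forall>r\<in>prime_factors n. r \<le> ?j" by auto
      have jp: "prime ?j" "?j dvd n" using jin by (auto simp: in_prime_factors_iff)
      have "?j \<le> n" using jp(2) n by (intro dvd_imp_le) auto
      hence "?j \<in> ?I" using jp(1) n prime_ge_2_nat[OF jp(1)] by auto
      moreover have "n \<in> Nk ?j" unfolding Nk_def using n jin jge by auto
      ultimately show "n \<in> (\<Union>j\<in>?I. Nk j)" by blast
    qed
  qed
  also have "card {2..q-1} = q - 2" by simp
  finally show ?thesis using prime_ge_2_nat[OF q] by (simp add: of_nat_diff)
qed

definition L where "L = nat \<lfloor>log 2 (real q)\<rfloor>"

lemma mult_le_L:
  assumes p: "prime p" and n: "1 \<le> n" "n < q"
  shows "multiplicity p n \<le> L"
proof -
  let ?m = "multiplicity p n"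
  have "p ^ ?m dvd n" by (rule multiplicity_dvd)
  hence "p ^ ?m \<le> n" using n by (simp add: dvd_imp_le)
  moreover have "2 ^ ?m \<le> p ^ ?m" using p prime_ge_2_nat power_mono by blast
  ultimately have "(2::nat) ^ ?m < q" using n by linarith
  hence "real ((2::nat) ^ ?m) < real q" by linarith
  hence "2 powr real ?m < real q" by (simp add: powr_realpow)
  hence "real ?m < log 2 (real q)" using q0 by (subst less_log_iff) auto
  hence "int ?m \<le> \<lfloor>log 2 (real q)\<rfloor>" by (simp add: le_floor_iff)
  thus ?thesis unfolding L_def by linarith
qed

lemma smooth_card:
  "card {n\<in>{1..q-1}. \<forall>p\<in>prime_factors n. p < y} \<le> (L+1)^y"
proof -
  let ?S = "{n\<in>{1..q-1}. \<forall>p\<in>prime_factors n. p < y}"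
  let ?Y = "{p. p < y \<and> prime p}"
  let ?f = "\<lambda>n. restrict (\<lambda>p. multiplicity p n) ?Y"
  have finY: "finite ?Y" by (rule finite_subset[of _ "{..<y}"]) auto
  have inj: "inj_on ?f ?S"
  proof (rule inj_onI)
    fix n n' assume n: "n \<in> ?S" and n': "n' \<in> ?S" and eq: "?f n = ?f n'"
    show "n = n'"
    proof (rule multiplicity_eq_nat)
      show "n > 0" "n' > 0" using n n' by auto
      fix p :: nat assume pp: "prime p"
      show "multiplicity p n = multiplicity p n'"
      proof (cases "p < y")
        case True
        hence "p \<in> ?Y" using pp by simp
        thus ?thesis using fun_cong[OF eq, of p] by simp
      next
        case False
        hence "p \<notin> prime_factors n" "p \<notin> prime_factors n'" using n n' by auto
        hence "\<not> p dvd n" "\<not> p dvd n'" using pp n n' by (auto simp: in_prime_factors_iff)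
        thus ?thesis by (simp add: not_dvd_imp_multiplicity_0)
      qed
    qed
  qed
  have sub: "?f ` ?S \<subseteq> PiE ?Y (\<lambda>_. {0..L})"
  proof
    fix x assume "x \<in> ?f ` ?S"
    then obtain n where n: "n \<in> ?S" "x = ?f n" by blast
    have "multiplicity p n \<le> L" if "p \<in> ?Y" for p
      using that n(1) by (intro mult_le_L) auto
    thus "x \<in> PiE ?Y (\<lambda>_. {0..L})" using n(2) by auto
  qed
  have "card ?S = card (?f ` ?S)" using inj by (simp add: card_image)
  also have "\<dots> \<le> card (PiE ?Y (\<lambda>_. {0..L}))" using sub finY by (intro card_mono finite_PiE) auto
  also have "\<dots> = (L+1) ^ card ?Y" using finY by (simp add: card_PiE)
  also have "\<dots> \<le> (L+1) ^ y"
  proof (rule power_increasing)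
    show "card ?Y \<le> y" using card_mono[of "{..<y}" ?Y] by auto
  qed simp
  finally show ?thesis .
qed

lemma a_smooth:
  assumes "prime j" "j < y"
  shows "a j * q \<le> real ((L+1)^y)"
proof -
  have "Nk j \<subseteq> {n\<in>{1..q-1}. \<forall>p\<in>prime_factors n. p < y}"
    unfolding Nk_def using assms by auto
  hence "card (Nk j) \<le> card {n\<in>{1..q-1}. \<forall>p\<in>prime_factors n. p < y}" by (intro card_mono) auto
  also note smooth_card
  finally have "real (card (Nk j)) \<le> real ((L+1)^y)" by linarith
  thus ?thesis unfolding a_def using assms q0 by simp
qed

end


lemma prod_upper:
  fixes a :: "nat \<Rightarrow> real"
  assumes "finite J" "\<And>j. j \<in> J \<Longrightarrow> 0 \<le> a j \<and> a j \<le> 1/2"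
  shows "(\<Prod>j\<in>J. 1 - a j) \<le> exp (- (\<Sum>j\<in>J. a j))"
proof -
  have "(\<Prod>j\<in>J. 1 - a j) \<le> (\<Prod>j\<in>J. exp (- a j))"
  proof (rule prod_mono)
    fix j assume "j \<in> J"
    thus "0 \<le> 1 - a j \<and> 1 - a j \<le> exp (- a j)" using assms(2)[of j] exp_ge_add_one_self[of "- a j"] by auto
  qed
  also have "\<dots> = exp (- (\<Sum>j\<in>J. a j))" using exp_sum[OF assms(1), of "\<lambda>j. - a j"] by (simp add: sum_negf)
  finally show ?thesis .
qed

lemma prod_lower:
  fixes a :: "nat \<Rightarrow> real"
  assumes "finite J" "\<And>j. j \<in> J \<Longrightarrow> 0 \<le> a j \<and> a j \<le> 1/2"
  shows "exp (- (\<Sum>j\<in>J. a j) - 2 * (\<Sum>j\<in>J. (a j)^2)) \<le> (\<Prod>j\<in>J. 1 - a j)"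
proof -
  have "exp (- (\<Sum>j\<in>J. a j) - 2 * (\<Sum>j\<in>J. (a j)^2)) = exp (\<Sum>j\<in>J. - a j - 2 * (a j)^2)"
    by (simp add: sum_subtractf sum_negf sum_distrib_left)
  also have "\<dots> = (\<Prod>j\<in>J. exp (- a j - 2 * (a j)^2))" by (rule exp_sum[OF assms(1)])
  also have "\<dots> \<le> (\<Prod>j\<in>J. 1 - a j)"
  proof (rule prod_mono)
    fix j assume j: "j \<in> J"
    have h: "0 \<le> a j" "a j \<le> 1/2" using assms(2)[OF j] by auto
    have "- a j - 2 * (a j)^2 \<le> ln (1 - a j)" by (rule ln_one_minus_pos_lower_bound[OF h])
    hence "exp (- a j - 2 * (a j)^2) \<le> exp (ln (1 - a j))" by simp
    also have "\<dots> = 1 - a j" using h by simp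
    finally show "0 \<le> exp (- a j - 2 * (a j)^2) \<and> exp (- a j - 2 * (a j)^2) \<le> 1 - a j" by simp
  qed
  finally show ?thesis .
qed

context qsetup begin

lemma main_bound:
  assumes m: "\<And>j. a j \<le> m" and q4: "4 \<le> q"
  shows "\<bar>cq q x0 - exp (-1)\<bar> \<le> 2 * m + 4 / q"
proof -
  let ?J = "{2..<q}"
  let ?s = "\<Sum>j\<in>?J. a j"
  let ?t = "\<Sum>j\<in>?J. (a j)^2"
  let ?Pr = "\<Prod>j\<in>?J. 1 - a j"
  have qr: "real q \<ge> 4" using q4 by linarith
  have hj: "\<And>j. j \<in> ?J \<Longrightarrow> 0 \<le> a j \<and> a j \<le> 1/2" using a_nonneg a_le_half by auto
  have s: "?s = 1 - 2 / q" using sum_a qr by (simp add: field_simps)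
  have m0: "0 \<le> m" using m[of 0] a_nonneg[of 0] by linarith
  have t0: "0 \<le> ?t" by (intro sum_nonneg) auto
  have "?t \<le> (\<Sum>j\<in>?J. m * a j)"
  proof (rule sum_mono)
    fix j assume "j \<in> ?J"
    show "(a j)^2 \<le> m * a j" using m[of j] a_nonneg[of j] by (simp add: power2_eq_square mult_right_mono)
  qed
  also have "\<dots> = m * ?s" by (simp add: sum_distrib_left)
  also have "\<dots> \<le> m" using s m0 qr by (simp add: mult_left_le)
  finally have tm: "?t \<le> m" .
  have wb: "?Pr \<le> w q" "w q \<le> ?Pr + ?t" using w_bounds[of q] q4 by auto
  have "exp (-1) \<le> exp (- ?s)" using s qr by simp
  have es1: "exp (- ?s) \<le> 1" using s qr by simp
  have lo: "exp (-1) - 2 * m \<le> w q"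
  proof -
    have "exp (- ?s) * (1 - 2 * ?t) \<le> exp (- ?s) * exp (- 2 * ?t)"
      using exp_ge_add_one_self[of "- 2 * ?t"] by (intro mult_left_mono) auto
    also have "\<dots> = exp (- ?s - 2 * ?t)" by (simp add: exp_add[symmetric])
    also have "\<dots> \<le> ?Pr" by (rule prod_lower) (use hj in auto)
    finally have "exp (- ?s) - exp (- ?s) * (2 * ?t) \<le> ?Pr" by (simp add: algebra_simps)
    moreover have "exp (- ?s) * (2 * ?t) \<le> 2 * ?t" using es1 t0 by (simp add: mult_left_le_one_le)
    moreover have "exp (-1) \<le> exp (- ?s)" using s qr by simp
    ultimately show ?thesis using wb tm by linarith
  qed
  have up: "w q \<le> exp (-1) + 4 / q + m"
  proof -
    have "?Pr \<le> exp (- ?s)" by (rule prod_upper) (use hj in auto)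
    also have "exp (- ?s) = exp (-1) * exp (2 / q)" using s by (simp add: exp_add[symmetric])
    also have "exp (2 / real q) \<le> 1 + 2 * (2 / q)"
      using exp_bound_lemma[of "2 / real q"] qr by simp
    hence "exp (-1) * exp (2 / real q) \<le> exp (-1) * (1 + 4 / q)" by (intro mult_left_mono) auto
    also have "\<dots> \<le> exp (-1) + 4 / q"
    proof -
      have "exp (-1::real) \<le> 1" by simp
      hence "exp (-1) * (4 / real q) \<le> 4 / q" using qr by (intro mult_left_le_one_le) auto
      thus ?thesis by (simp add: algebra_simps)
    qed
    finally show ?thesis using wb tm by linarith
  qed
  have "0 \<le> 4 / real q" by simp
  hence "exp (-1) - w q \<le> 2 * m + 4 / q" "w q - exp (-1) \<le> 2 * m + 4 / q" using lo up m0 by linarith+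
  thus ?thesis using w_q by (simp add: abs_le_iff)
qed

end


lemma ev_facts:
  "eventually (\<lambda>x::real. (log 2 x + 1) powr (ln (ln x) + 1) \<le> x / ln (ln x) \<and>
     4 / x \<le> 1 / ln (ln x) \<and> 2 \<le> ln (ln x) \<and> 4 \<le> x) at_top"
proof -
  have 1: "eventually (\<lambda>x::real. (log 2 x + 1) powr (ln (ln x) + 1) \<le> x / ln (ln x)) at_top" by real_asymp
  have 2: "eventually (\<lambda>x::real. 4 / x \<le> 1 / ln (ln x)) at_top" by real_asymp
  have 3: "eventually (\<lambda>x::real. 2 \<le> ln (ln x)) at_top" by real_asymp
  have 4: "eventually (\<lambda>x::real. 4 \<le> x) at_top" by real_asymp
  show ?thesis using 1 2 3 4 by eventually_elim auto
qed

theorem theorem1p1: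
  shows "\<exists>C Q. \<forall>q x0. prime q \<and> q \<ge> Q \<and> x0 \<in> {1..<q} \<longrightarrow>
           \<bar>cq q x0 - exp (-1)\<bar> \<le> C / plog2 (real q)"
proof -
  obtain X where X: "\<And>x. x \<ge> X \<Longrightarrow> (log 2 x + 1) powr (ln (ln x) + 1) \<le> x / ln (ln x) \<and>
     4 / x \<le> 1 / ln (ln x) \<and> 2 \<le> ln (ln x) \<and> 4 \<le> x"
    using ev_facts unfolding eventually_at_top_linorder by blast
  show ?thesis
  proof (intro exI allI impI)
    fix q x0 :: nat
    assume asm: "prime q \<and> nat \<lceil>X\<rceil> \<le> q \<and> x0 \<in> {1..<q}"
    hence qX: "real q \<ge> X" by linarith
    note F = X[OF qX]
    interpret qsetup q x0 using asm by unfold_locales auto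
    define Y where "Y = ln (ln (real q))"
    have Y2: "Y \<ge> 2" using F Y_def by simp
    have q4: "4 \<le> q" using F by simp
    have lnq: "ln (real q) \<ge> 2"
    proof (rule ccontr)
      assume "\<not> ln (real q) \<ge> 2"
      hence "ln (real q) < 2" by simp
      moreover have "ln (real q) > 0" using q4 by simp
      ultimately have "ln (ln (real q)) < ln 2" by simp
      moreover have "ln (2::real) < 2" using ln_less_self[of 2] by simp
      ultimately show False using Y2 Y_def by simp
    qed
    have plog: "plog2 (real q) = Y" unfolding plog2_def plog_def Y_def using lnq Y2 Y_def by simp
    have am: "a j \<le> 1 / Y" for j
    proof (cases "prime j")
      case False thus ?thesis unfolding a_def using Y2 by simp
    next
      case True
      show ?thesis
      proof (cases "real j \<ge> Y")
        case True
        have "a j \<le> 1 / j" by (rule a_le_inv[OF \<open>prime j\<close>])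
        also have "\<dots> \<le> 1 / Y" using True Y2 by (intro divide_left_mono) auto
        finally show ?thesis .
      next
        case False
        define y where "y = nat \<lceil>Y\<rceil>"
        have jy: "j < y" using False unfolding y_def by linarith
        have yY: "real y \<le> Y + 1" unfolding y_def using Y2 by linarith
        have "a j * q \<le> real ((L+1)^y)" by (rule a_smooth[OF \<open>prime j\<close> jy])
        also have "\<dots> = (real L + 1) ^ y" by (simp add: add.commute)
        also have "\<dots> \<le> (log 2 q + 1) ^ y"
        proof (rule power_mono)
          have "log 2 (real q) \<ge> 0" using q4 by simp
          thus "real L + 1 \<le> log 2 (real q) + 1" unfolding L_def by linarith
        qed simp
        also have "\<dots> = (log 2 q + 1) powr real y"
        proof -
          have "log 2 (real q) \<ge> 0" using q4 by simp
          thus ?thesis by (subst powr_realpow) auto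
        qed
        also have "\<dots> \<le> (log 2 q + 1) powr (Y + 1)"
          using q4 yY by (intro powr_mono) auto
        also have "\<dots> \<le> real q / Y" using F unfolding Y_def by simp
        finally have "a j * q \<le> real q / Y" .
        thus ?thesis using q4 Y2 by (simp add: field_simps)
      qed
    qed
    have "\<bar>cq q x0 - exp (-1)\<bar> \<le> 2 * (1 / Y) + 4 / q" by (rule main_bound[OF am q4])
    also have "4 / real q \<le> 1 / Y" using F unfolding Y_def by simp
    hence "2 * (1 / Y) + 4 / q \<le> 3 / Y" by simp
    finally show "\<bar>cq q x0 - exp (-1)\<bar> \<le> 3 / plog2 (real q)" using plog by simp
  qed
qed


end
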